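(* In a finite dynamic game as described in the context, suppose $K^i$ is unilaterally sufficient information for player $i\in\mathcal{I}$. Then for each $j\in\mathcal{I}\setminus\{i\}$ and $t\in\mathcal{T}$ there exist functions $\Pi_t^{j,i,g^{-\{i,j\}}}:\mathcal{K}_t^i\times\mathcal{H}_t^j\times\mathcal{U}_t^i\times\mathcal{U}_t^j\to\Delta(\mathcal{H}_{t+1}^j)$ and $r_t^{i,j,g^{-\{i,j\}}}:\mathcal{K}_t^i\times\mathcal{H}_t^j\times\mathcal{U}_t^i\times\mathcal{U}_t^j\to[-1,1]$, depending on the strategy profile $g$ only through $g^{-\{i,j\}}=(g^l)_{l\notin\{i,j\}}$, such that for all behavioral strategy profiles $g$: (1) $\Pr^g(\tilde h_{t+1}^j\mid h_t^i,h_t^j,u_t^i,u_t^j)=\Pi_t^{j,i,g^{-\{i,j\}}}(\tilde h_{t+1}^j\mid k_t^i,h_t^j,u_t^i,u_t^j)$ for all $t<T$, and (2) $\mathbb{E}^g[R_t^j\mid h_t^i,h_t^j,u_t^i,u_t^j]=r_t^{i,j,g^{-\{i,j\}}}(k_t^i,h_t^j,u_t^i,u_t^j)$ for all $t$, whenever the left-hand sides are well defined (the conditioning event has positive probability).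
   Context: Game model: finite set of players $\mathcal{I}$, times $\mathcal{T}=\{1,\dots,T\}$. At time $t$ each player $i$ takes action $U_t^i\in\mathcal{U}_t^i$, obtains reward $R_t^i\in[-1,1]$ and learns new information $Z_t^i\in\mathcal{Z}_t^i$. There is a state $X_t\in\mathcal{X}_t$ with $(X_{t+1},Z_t,R_t)=f_t(X_t,U_t,W_t)$ for fixed functions $f_t$. Primitive random variables $(X_1,H_1)$ and $W_1,\dots,W_T$ are mutually independent with commonly known distributions. All sets are finite. Perfect recall: $H_t^i=(H_1^i,Z_{1:t-1}^i)\in\mathcal{H}_t^i$, and $U_t^i$ is a component of $Z_t^i$. Behavioral strategy $g_t^i:\mathcal{H}_t^i\to\Delta(\mathcal{U}_t^i)$. A realization is admissible under $g$ if it has positive probability under $g$. Compression: $K_1^i=\iota_1^i(H_1^i)$, $K_t^i=\iota_t^i(K_{t-1}^i,Z_{t-1}^i)$ for fixed maps, finite value sets $\mathcal{K}_t^i$; $k_t^i$ is the compression of $h_t^i$. Unilaterally sufficient information (USI): $K^i$ is USI for player $i$ if there exist $F_t^{i,g^i}:\mathcal{K}_t^i\to\Delta(\mathcal{H}_t^i)$ depending only on $g^i$ and $\Phi_t^{i,g^{-i}}:\mathcal{K}_t^i\to\Delta(\mathcal{X}_t\times\mathcal{H}_t^{-i})$ depending only on $g^{-i}$ with $\Pr^g(x_t,h_t\mid k_t^i)=F_t^{i,g^i}(h_t^i\mid k_t^i)\Phi_t^{i,g^{-i}}(x_t,h_t^{-i}\mid k_t^i)$ for all behavioral profiles $g$,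 all $t$, all $k_t^i$ admissible under $g$ (with $x_t,h_t^i,h_t^{-i}$ ranging independently; the left side is $0$ if they disagree on shared components). *)

theory Defs
  imports "HOL-Probability.Probability"
begin

(* Players: a finite type 'i (the player set is UNIV).  Times 1..T.
   Private information learned at time t by player l is Z_t^l = (U_t^l, Y_t^l),
   so that the own action is a component of Z_t^l.
   A history of player l at time t is H_t^l = (H_1^l, [Z_1^l, ..., Z_{t-1}^l]). *)

type_synonym ('h1,'u,'y) hist = "'h1 \<times> ('u \<times> 'y) list"

(* a behavioural strategy profile: g t l h is the distribution of U_t^l given H_t^l = h *)
type_synonym ('i,'h1,'u,'y) profile = "nat \<Rightarrow> 'i \<Rightarrow> ('h1,'u,'y) hist \<Rightarrow> 'u pmf"

(* f t x u w = (X_{t+1}, (Y_t^l)_l, (R_t^l)_l) *)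
type_synonym ('x,'i,'u,'w,'y) dyn = "nat \<Rightarrow> 'x \<Rightarrow> ('i \<Rightarrow> 'u) \<Rightarrow> 'w \<Rightarrow> 'x \<times> ('i \<Rightarrow> 'y) \<times> ('i \<Rightarrow> real)"

definition behavioral :: "nat \<Rightarrow> (nat \<Rightarrow> 'i \<Rightarrow> 'u set) \<Rightarrow> ('i,'h1,'u,'y) profile \<Rightarrow> bool" where
  "behavioral T U g \<longleftrightarrow>
     (\<forall>t\<in>{1..T}. \<forall>l h. length (snd h) = t - 1 \<longrightarrow> set_pmf (g t l h) \<subseteq> U t l)"

definition agree_on :: "nat \<Rightarrow> 'i set \<Rightarrow> ('i,'h1,'u,'y) profile \<Rightarrow> ('i,'h1,'u,'y) profile \<Rightarrow> bool" where
  "agree_on T P g g' \<longleftrightarrow>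
     (\<forall>t\<in>{1..T}. \<forall>l\<in>P. \<forall>h. length (snd h) = t - 1 \<longrightarrow> g t l h = g' t l h)"

(* one period: from the distribution S of (X_t, H_t) to the joint distribution of
   (X_t, H_t, U_t, (X_{t+1}, Y_t, R_t)) *)
definition step_pmf ::
  "('i::finite,'h1,'u,'y) profile \<Rightarrow> ('x,'i,'u,'w,'y) dyn \<Rightarrow> (nat \<Rightarrow> 'w pmf) \<Rightarrow> nat
   \<Rightarrow> ('x \<times> ('i \<Rightarrow> ('h1,'u,'y) hist)) pmf
   \<Rightarrow> ('x \<times> ('i \<Rightarrow> ('h1,'u,'y) hist) \<times> ('i \<Rightarrow> 'u) \<times> ('x \<times> ('i \<Rightarrow> 'y) \<times> ('i \<Rightarrow> real))) pmf" where
  "step_pmf g f W t S =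
     S \<bind> (\<lambda>(x, h). Pi_pmf UNIV undefined (\<lambda>l. g t l (h l)) \<bind>
       (\<lambda>u. map_pmf (\<lambda>w. (x, h, u, f t x u w)) (W t)))"

definition next_hist :: "('h1,'u,'y) hist \<Rightarrow> 'u \<Rightarrow> 'y \<Rightarrow> ('h1,'u,'y) hist" where
  "next_hist h u y = (fst h, snd h @ [(u, y)])"

definition post ::
  "('x \<times> ('i \<Rightarrow> ('h1,'u,'y) hist) \<times> ('i \<Rightarrow> 'u) \<times> ('x \<times> ('i \<Rightarrow> 'y) \<times> ('i \<Rightarrow> real)))
   \<Rightarrow> 'x \<times> ('i \<Rightarrow> ('h1,'u,'y) hist)" where
  "post \<omega> = (case \<omega> of (x, h, u, (x', y, r)) \<Rightarrow> (x', \<lambda>l. next_hist (h l) (u l) (y l)))"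

(* state_pmf ... n = distribution of (X_{n+1}, H_{n+1}) under g *)
fun state_pmf ::
  "('x \<times> ('i \<Rightarrow> 'h1)) pmf \<Rightarrow> (nat \<Rightarrow> 'w pmf) \<Rightarrow> ('x,'i::finite,'u,'w,'y) dyn
   \<Rightarrow> ('i,'h1,'u,'y) profile \<Rightarrow> nat \<Rightarrow> ('x \<times> ('i \<Rightarrow> ('h1,'u,'y) hist)) pmf" where
  "state_pmf init W f g 0 = map_pmf (\<lambda>(x, h1). (x, \<lambda>l. (h1 l, []))) init"
| "state_pmf init W f g (Suc n) = map_pmf post (step_pmf g f W (Suc n) (state_pmf init W f g n))"

definition state_at where
  "state_at init W f g t = state_pmf init W f g (t - 1)"

definition trans_at where
  "trans_at init W f g t = step_pmf g f W t (state_at init W f g t)"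

definition cprob :: "'a pmf \<Rightarrow> 'a set \<Rightarrow> 'a set \<Rightarrow> real" where
  "cprob p A B = measure_pmf.prob p (A \<inter> B) / measure_pmf.prob p B"

definition cexp :: "'a pmf \<Rightarrow> ('a \<Rightarrow> real) \<Rightarrow> 'a set \<Rightarrow> real" where
  "cexp p X B = measure_pmf.expectation p (\<lambda>\<omega>. indicator B \<omega> * X \<omega>) / measure_pmf.prob p B"

(* compression: K_1 = iota1 l H_1, K_{t} = iota t l K_{t-1} Z_{t-1} *)
fun comp_aux :: "(nat \<Rightarrow> 'i \<Rightarrow> 'k \<Rightarrow> 'u \<times> 'y \<Rightarrow> 'k) \<Rightarrow> 'i \<Rightarrow> nat \<Rightarrow> 'k \<Rightarrow> ('u \<times> 'y) list \<Rightarrow> 'k" where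
  "comp_aux \<iota> l t k [] = k"
| "comp_aux \<iota> l t k (z # zs) = comp_aux \<iota> l (Suc t) (\<iota> (Suc t) l k z) zs"

definition compress :: "('i \<Rightarrow> 'h1 \<Rightarrow> 'k) \<Rightarrow> (nat \<Rightarrow> 'i \<Rightarrow> 'k \<Rightarrow> 'u \<times> 'y \<Rightarrow> 'k) \<Rightarrow> 'i \<Rightarrow> ('h1,'u,'y) hist \<Rightarrow> 'k" where
  "compress \<iota>1 \<iota> l h = comp_aux \<iota> l 1 (\<iota>1 l (fst h)) (snd h)"

(* Unilaterally sufficient information for player i.
   F depends on the profile only through g^i, Phi only through g^{-i};
   the pair (x, h^{-i}) is represented as (x, h(i := undefined)). *)
definition USI ::
  "('x \<times> ('i \<Rightarrow> 'h1)) pmf \<Rightarrow> (nat \<Rightarrow> 'w pmf) \<Rightarrow> ('x,'i::finite,'u,'w,'y) dyn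
   \<Rightarrow> (nat \<Rightarrow> 'i \<Rightarrow> 'u set) \<Rightarrow> nat \<Rightarrow> ('i \<Rightarrow> 'h1 \<Rightarrow> 'k) \<Rightarrow> (nat \<Rightarrow> 'i \<Rightarrow> 'k \<Rightarrow> 'u \<times> 'y \<Rightarrow> 'k)
   \<Rightarrow> 'i \<Rightarrow> bool" where
  "USI init W f U T \<iota>1 \<iota> i \<longleftrightarrow>
    (\<exists>(F :: ('i,'h1,'u,'y) profile \<Rightarrow> nat \<Rightarrow> 'k \<Rightarrow> ('h1,'u,'y) hist pmf)
      (\<Phi> :: ('i,'h1,'u,'y) profile \<Rightarrow> nat \<Rightarrow> 'k \<Rightarrow> ('x \<times> ('i \<Rightarrow> ('h1,'u,'y) hist)) pmf).
      (\<forall>g g'. behavioral T U g \<and> behavioral T U g' \<and> agree_on T {i} g g' \<longrightarrow> F g = F g') \<and>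
      (\<forall>g g'. behavioral T U g \<and> behavioral T U g' \<and> agree_on T (- {i}) g g' \<longrightarrow> \<Phi> g = \<Phi> g') \<and>
      (\<forall>g. behavioral T U g \<longrightarrow>
        (\<forall>t\<in>{1..T}. \<forall>k.
          measure_pmf.prob (state_at init W f g t) {(x, h). compress \<iota>1 \<iota> i (h i) = k} > 0 \<longrightarrow>
          (\<forall>x h. cprob (state_at init W f g t) {(x, h)} {(x', h'). compress \<iota>1 \<iota> i (h' i) = k}
                 = pmf (F g t k) (h i) * pmf (\<Phi> g t k) (x, h(i := undefined))))))"

end

theory Submission
  imports Defs
begin


definition prevh :: "('h1,'u,'y) hist \<Rightarrow> ('h1,'u,'y) hist" where
  "prevh hl = (fst hl, butlast (snd hl))"
definition lastu :: "('h1,'u,'y) hist \<Rightarrow> 'u" where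
  "lastu hl = fst (last (snd hl))"
definition lasty :: "('h1,'u,'y) hist \<Rightarrow> 'y" where
  "lasty hl = snd (last (snd hl))"

definition wl :: "('i,'h1,'u,'y) profile \<Rightarrow> 'i \<Rightarrow> nat \<Rightarrow> ('h1,'u,'y) hist \<Rightarrow> real" where
  "wl g l n hl = (if length (snd hl) = n then
     (\<Prod>s<n. pmf (g (Suc s) l (fst hl, take s (snd hl))) (fst (snd hl ! s))) else 0)"

fun Qf :: "('x \<times> ('i \<Rightarrow> 'h1)) pmf \<Rightarrow> (nat \<Rightarrow> 'w pmf) \<Rightarrow> ('x::finite,'i::finite,'u,'w,'y) dyn
   \<Rightarrow> nat \<Rightarrow> 'x \<times> ('i \<Rightarrow> ('h1,'u,'y) hist) \<Rightarrow> real" where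
  "Qf init W f 0 p = pmf (map_pmf (\<lambda>(x, h1). (x, \<lambda>l. (h1 l, []))) init) p"
| "Qf init W f (Suc n) (x', h') = (if (\<forall>l. snd (h' l) \<noteq> []) then
     (\<Sum>x\<in>UNIV. Qf init W f n (x, \<lambda>l. prevh (h' l)) *
        measure_pmf.prob (W (Suc n)) {w. fst (f (Suc n) x (\<lambda>l. lastu (h' l)) w) = x' \<and>
                                         fst (snd (f (Suc n) x (\<lambda>l. lastu (h' l)) w)) = (\<lambda>l. lasty (h' l))})
     else 0)"

lemma nh_eq: "next_hist hl u y = hl' \<longleftrightarrow> snd hl' \<noteq> [] \<and> hl = prevh hl' \<and> u = lastu hl' \<and> y = lasty hl'"
  by (cases hl; cases hl'; cases "snd hl'" rule: rev_cases)
     (auto simp: next_hist_def prevh_def lastu_def lasty_def)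

lemma set_step_iff: "\<omega> \<in> set_pmf (step_pmf g f W t S) \<Longrightarrow>
   \<exists>x h u w. \<omega> = (x, h, u, f t x u w) \<and> (x, h) \<in> set_pmf S \<and> (\<forall>l. u l \<in> set_pmf (g t l (h l)))"
  unfolding step_pmf_def
  by (auto simp: set_bind_pmf set_Pi_pmf PiE_dflt_def) blast

lemma set_step: "set_pmf (step_pmf g f W t S) \<subseteq>
   (\<lambda>(a, u, w). (fst a, snd a, u, f t (fst a) u w)) ` (set_pmf S \<times> UNIV \<times> UNIV)"
proof
  fix \<omega> assume "\<omega> \<in> set_pmf (step_pmf g f W t S)"
  from set_step_iff[OF this] obtain x h u w where "\<omega> = (x, h, u, f t x u w)" "(x, h) \<in> set_pmf S" by blast
  then show "\<omega> \<in> (\<lambda>(a, u, w). (fst a, snd a, u, f t (fst a) u w)) ` (set_pmf S \<times> UNIV \<times> UNIV)"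
    by (intro rev_image_eqI[of "((x,h),u,w)"]) auto
qed

lemma fin_step: "finite (set_pmf S) \<Longrightarrow> finite (set_pmf (step_pmf g f W t (S :: ('x \<times> ('i::finite \<Rightarrow> ('h1,'u::finite,'y) hist)) pmf)) :: (_ \<times> _ \<times> _ \<times> 'x \<times> _) set)"
  for W :: "nat \<Rightarrow> 'w::finite pmf"
  by (rule finite_subset[OF set_step]) (auto intro: finite_imageI simp: finite_cartesian_product)

lemma fin_state: "finite (set_pmf (state_pmf (init :: ('x::finite \<times> ('i::finite \<Rightarrow> 'h1::finite)) pmf) W (f :: ('x,'i,'u::finite,'w::finite,'y) dyn) g n))"
proof (induction n)
  case 0
  have "finite (set_pmf init)" by (rule finite_subset[of _ UNIV]) auto
  then show ?case by simp
next
  case (Suc n)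
  then show ?case by (simp add: fin_step)
qed

lemma len_state: "(x, h) \<in> set_pmf (state_pmf init W f g n) \<Longrightarrow> length (snd (h l)) = n"
proof (induction n arbitrary: x h)
  case 0
  then show ?case by auto
next
  case (Suc n)
  from Suc.prems obtain \<omega> where w: "\<omega> \<in> set_pmf (step_pmf g f W (Suc n) (state_pmf init W f g n))" "(x,h) = post \<omega>"
    by auto
  from set_step_iff[OF w(1)] obtain x0 h0 u w' where "\<omega> = (x0, h0, u, f (Suc n) x0 u w')"
    "(x0, h0) \<in> set_pmf (state_pmf init W f g n)" by blast
  with w(2) Suc.IH show ?case by (auto simp: post_def next_hist_def split: prod.splits)
qed



lemma fin_inner: "finite (set_pmf (Pi_pmf UNIV undefined G \<bind> (\<lambda>u. map_pmf (\<lambda>w. (x, h, u, f t x u w)) (W t))))"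
  for G :: "'i::finite \<Rightarrow> 'u::finite pmf" and W :: "nat \<Rightarrow> 'w::finite pmf"
proof -
  have "set_pmf (Pi_pmf UNIV undefined G \<bind> (\<lambda>u. map_pmf (\<lambda>w. (x, h, u, f t x u w)) (W t)))
     \<subseteq> (\<lambda>(u,w). (x, h, u, f t x u w)) ` UNIV" by (auto simp: set_bind_pmf)
  then show ?thesis by (rule finite_subset) auto
qed

lemma exp_inner:
  fixes W :: "nat \<Rightarrow> 'w::finite pmf" and \<phi> :: "_ \<Rightarrow> real"
    and h :: "'i::finite \<Rightarrow> ('h1,'u::finite,'y) hist" and g :: "('i,'h1,'u,'y) profile"
  shows "measure_pmf.expectation (Pi_pmf UNIV undefined (\<lambda>l. g t l (h l)) \<bind> (\<lambda>u. map_pmf (\<lambda>w. (x, h, u, f t x u w)) (W t))) \<phi> =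
      (\<Sum>u\<in>UNIV. (\<Prod>l\<in>UNIV. pmf (g t l (h l)) (u l)) * measure_pmf.expectation (W t) (\<lambda>w. \<phi> (x, h, u, f t x u w)))"
      apply (subst pmf_expectation_bind[of UNIV])
      apply simp_all
      apply (rule sum.cong[OF refl])
      apply (subst pmf_Pi')
      apply auto
      done

lemma exp_step:
  fixes S :: "('x \<times> ('i::finite \<Rightarrow> ('h1,'u::finite,'y) hist)) pmf"
    and W :: "nat \<Rightarrow> 'w::finite pmf" and \<phi> :: "_ \<Rightarrow> real" and g :: "('i,'h1,'u,'y) profile"
  assumes "finite (set_pmf S)"
  shows "measure_pmf.expectation (step_pmf g f W t S) \<phi> =
    (\<Sum>a\<in>set_pmf S. pmf S a * (\<Sum>u\<in>UNIV. (\<Prod>l\<in>UNIV. pmf (g t l (snd a l)) (u l)) *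
        measure_pmf.expectation (W t) (\<lambda>w. \<phi> (fst a, snd a, u, f t (fst a) u w))))"
  unfolding step_pmf_def
  apply (subst pmf_expectation_bind[of "set_pmf S"])
  using assms apply (auto simp: fin_inner exp_inner intro!: sum.cong)
  done



lemma sum_pmf_change:
  fixes F :: "'a \<Rightarrow> real"
  assumes "finite (set_pmf S)" "finite A" "\<And>a. a \<in> set_pmf S \<Longrightarrow> F a \<noteq> 0 \<Longrightarrow> a \<in> A"
  shows "(\<Sum>a\<in>set_pmf S. pmf S a * F a) = (\<Sum>a\<in>A. pmf S a * F a)"
proof -
  have "(\<Sum>a\<in>set_pmf S. pmf S a * F a) = measure_pmf.expectation S F"
    using assms(1) by (subst integral_measure_pmf_real[of "set_pmf S"]) (auto simp: mult.commute)
  also have "\<dots> = (\<Sum>a\<in>A. pmf S a * F a)"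
    using assms by (subst integral_measure_pmf_real[of A]) (auto simp: mult.commute)
  finally show ?thesis .
qed

lemma post_eq: "post (x, h, u, a, y, r) = (x', h') \<longleftrightarrow>
   a = x' \<and> (\<forall>l. snd (h' l) \<noteq> []) \<and> h = (\<lambda>l. prevh (h' l)) \<and> u = (\<lambda>l. lastu (h' l)) \<and> y = (\<lambda>l. lasty (h' l))"
  by (auto simp: post_def fun_eq_iff nh_eq)

lemma post_eq2: "post (x, h, u, z) = (x', h') \<longleftrightarrow>
   fst z = x' \<and> (\<forall>l. snd (h' l) \<noteq> []) \<and> h = (\<lambda>l. prevh (h' l)) \<and> u = (\<lambda>l. lastu (h' l)) \<and> fst (snd z) = (\<lambda>l. lasty (h' l))"
  by (cases z) (auto simp: post_eq)

lemma exp_indicator: "measure_pmf.prob p A = measure_pmf.expectation p (indicator A :: _ \<Rightarrow> real)"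
  by simp

lemma pmf_state_Suc:
  fixes init :: "('x::finite \<times> ('i::finite \<Rightarrow> 'h1::finite)) pmf"
    and W :: "nat \<Rightarrow> 'w::finite pmf"
    and f :: "('x,'i,'u::finite,'w,'y::finite) dyn"
    and g :: "('i,'h1,'u,'y) profile"
  shows "pmf (state_pmf init W f g (Suc n)) (x', h') =
   (if \<forall>l. snd (h' l) \<noteq> [] then (\<Prod>l\<in>UNIV. pmf (g (Suc n) l (prevh (h' l))) (lastu (h' l))) *
      (\<Sum>x\<in>UNIV. pmf (state_pmf init W f g n) (x, \<lambda>l. prevh (h' l)) *
        measure_pmf.prob (W (Suc n)) {w. fst (f (Suc n) x (\<lambda>l. lastu (h' l)) w) = x' \<and>
                                         fst (snd (f (Suc n) x (\<lambda>l. lastu (h' l)) w)) = (\<lambda>l. lasty (h' l))})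
    else 0)"
proof -
  let ?S = "state_pmf init W f g n"
  let ?ph = "\<lambda>l. prevh (h' l)" and ?lu = "\<lambda>l. lastu (h' l)" and ?ly = "\<lambda>l. lasty (h' l)"
  let ?C = "\<forall>l. snd (h' l) \<noteq> []"
  define PW where "PW x = measure_pmf.prob (W (Suc n)) {w. fst (f (Suc n) x ?lu w) = x' \<and>
                                         fst (snd (f (Suc n) x ?lu w)) = ?ly}" for x
  have fin: "finite (set_pmf ?S)" by (rule fin_state)
  have ind: "measure_pmf.expectation (W (Suc n)) (\<lambda>w. indicator (post -` {(x', h')}) (x, h, u, f (Suc n) x u w) :: real)
     = (if ?C \<and> h = ?ph \<and> u = ?lu then PW x else 0)" for x h u
  proof (cases "?C \<and> h = ?ph \<and> u = ?lu")
    case True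
    have "(\<lambda>w. indicator (post -` {(x', h')}) (x, h, u, f (Suc n) x u w) :: real) =
       indicator {w. fst (f (Suc n) x ?lu w) = x' \<and> fst (snd (f (Suc n) x ?lu w)) = ?ly}"
    proof -
      have hu: "h = ?ph" "u = ?lu" using True by auto
      show ?thesis unfolding hu using True by (auto simp: fun_eq_iff indicator_def post_eq2)
    qed
    then show ?thesis using True by (simp add: PW_def)
  next
    case False
    have "(\<lambda>w. indicator (post -` {(x', h')}) (x, h, u, f (Suc n) x u w) :: real) = (\<lambda>w. 0)"
      using False by (auto simp: fun_eq_iff indicator_def post_eq2)
    then show ?thesis using False by (simp del: de_Morgan_conj)
  qed
  have inner: "(\<Sum>u\<in>UNIV. (\<Prod>l\<in>UNIV. pmf (g (Suc n) l (h l)) (u l)) * (if ?C \<and> h = ?ph \<and> u = ?lu then PW x else 0))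
     = (if ?C \<and> h = ?ph then (\<Prod>l\<in>UNIV. pmf (g (Suc n) l (?ph l)) (?lu l)) * PW x else 0)" for x h
  proof -
    have "(\<Sum>u\<in>UNIV. (\<Prod>l\<in>UNIV. pmf (g (Suc n) l (h l)) (u l)) * (if ?C \<and> h = ?ph \<and> u = ?lu then PW x else 0))
      = (\<Sum>u\<in>UNIV. if u = ?lu then (if ?C \<and> h = ?ph then (\<Prod>l\<in>UNIV. pmf (g (Suc n) l (?ph l)) (?lu l)) * PW x else 0) else 0)"
      by (intro sum.cong refl) auto
    also have "\<dots> = (if ?C \<and> h = ?ph then (\<Prod>l\<in>UNIV. pmf (g (Suc n) l (?ph l)) (?lu l)) * PW x else 0)"
      by (simp only: sum.delta finite UNIV_I if_True)
    finally show ?thesis .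
  qed
  have "pmf (state_pmf init W f g (Suc n)) (x', h') = measure_pmf.prob (step_pmf g f W (Suc n) ?S) (post -` {(x', h')})"
    by (simp add: pmf_map)
  also have "\<dots> = (\<Sum>a\<in>set_pmf ?S. pmf ?S a * (if ?C \<and> snd a = ?ph then (\<Prod>l\<in>UNIV. pmf (g (Suc n) l (?ph l)) (?lu l)) * PW (fst a) else 0))"
    by (simp only: exp_indicator exp_step[OF fin] ind inner)
  also have "\<dots> = (\<Sum>a\<in>range (\<lambda>x. (x, ?ph)). pmf ?S a * (if ?C \<and> snd a = ?ph then (\<Prod>l\<in>UNIV. pmf (g (Suc n) l (?ph l)) (?lu l)) * PW (fst a) else 0))"
    by (rule sum_pmf_change[OF fin]) (auto split: if_splits intro: rev_image_eqI)
  also have "\<dots> = (\<Sum>x\<in>UNIV. pmf ?S (x, ?ph) * (if ?C then (\<Prod>l\<in>UNIV. pmf (g (Suc n) l (?ph l)) (?lu l)) * PW x else 0))"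
    apply (subst sum.reindex) apply (simp add: inj_on_def) apply (simp only: comp_def fst_conv snd_conv simp_thms) done
  also have "\<dots> = (if ?C then (\<Prod>l\<in>UNIV. pmf (g (Suc n) l (?ph l)) (?lu l)) * (\<Sum>x\<in>UNIV. pmf ?S (x, ?ph) * PW x) else 0)"
  proof (cases ?C)
    case True
    then show ?thesis by (simp add: sum_distrib_left mult_ac)
  next
    case False
    then have "?C = False" by blast
    then show ?thesis by (simp only: if_False mult_zero_right sum.neutral_const)
  qed
  finally show ?thesis by (simp add: PW_def)
qed



lemma wl_Suc:
  assumes ne: "snd hl \<noteq> []"
  shows "wl g l (Suc n) hl = wl g l n (prevh hl) * pmf (g (Suc n) l (prevh hl)) (lastu hl)"
proof (cases "length (snd hl) = Suc n")
  case True
  let ?xs = "snd hl"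
  have lb: "length (butlast ?xs) = n" using True by simp
  have "(\<Prod>s<Suc n. pmf (g (Suc s) l (fst hl, take s ?xs)) (fst (?xs ! s))) =
        (\<Prod>s<n. pmf (g (Suc s) l (fst hl, take s ?xs)) (fst (?xs ! s))) *
        pmf (g (Suc n) l (fst hl, take n ?xs)) (fst (?xs ! n))"
    by (simp add: prod.lessThan_Suc)
  also have "(\<Prod>s<n. pmf (g (Suc s) l (fst hl, take s ?xs)) (fst (?xs ! s))) =
             (\<Prod>s<n. pmf (g (Suc s) l (fst hl, take s (butlast ?xs))) (fst (butlast ?xs ! s)))"
    using True by (intro prod.cong refl) (simp add: take_butlast nth_butlast)
  also have "take n ?xs = butlast ?xs" using True by (simp add: butlast_conv_take)
  also have "?xs ! n = last ?xs" using True ne by (simp add: last_conv_nth)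
  finally show ?thesis using True lb by (simp add: wl_def prevh_def lastu_def)
next
  case False
  then have "length (butlast (snd hl)) \<noteq> n" using ne by (cases "snd hl") auto
  then show ?thesis using False by (simp add: wl_def prevh_def)
qed

lemma prod_formula:
  fixes init :: "('x::finite \<times> ('i::finite \<Rightarrow> 'h1::finite)) pmf"
    and W :: "nat \<Rightarrow> 'w::finite pmf"
    and f :: "('x,'i,'u::finite,'w,'y::finite) dyn"
    and g :: "('i,'h1,'u,'y) profile"
  shows "pmf (state_pmf init W f g n) (x, h) = Qf init W f n (x, h) * (\<Prod>l\<in>UNIV. wl g l n (h l))"
proof (induction n arbitrary: x h)
  case 0
  show ?case
  proof (cases "(x, h) \<in> set_pmf (state_pmf init W f g 0)")
    case True
    then have "\<And>l. length (snd (h l)) = 0" by (rule len_state)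
    then show ?thesis by (simp add: wl_def)
  next
    case False
    then have "pmf (state_pmf init W f g 0) (x, h) = 0" by (simp add: set_pmf_iff del: state_pmf.simps)
    then show ?thesis by simp
  qed
next
  case (Suc n)
  let ?ph = "\<lambda>l. prevh (h l)" and ?lu = "\<lambda>l. lastu (h l)" and ?ly = "\<lambda>l. lasty (h l)"
  show ?case
  proof (cases "\<forall>l. snd (h l) \<noteq> []")
    case True
    have w: "(\<Prod>l\<in>UNIV. wl g l (Suc n) (h l)) =
      (\<Prod>l\<in>UNIV. wl g l n (?ph l)) * (\<Prod>l\<in>UNIV. pmf (g (Suc n) l (?ph l)) (?lu l))"
      using True by (simp add: wl_Suc prod.distrib)
    show ?thesis
      using True
      by (simp add: pmf_state_Suc Suc.IH w sum_distrib_left mult_ac del: state_pmf.simps)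
  next
    case False
    then show ?thesis by (simp only: pmf_state_Suc Qf.simps if_False)
  qed
qed



definition Ev :: "'i \<Rightarrow> 'i \<Rightarrow> ('h1,'u,'y) hist \<Rightarrow> ('h1,'u,'y) hist \<Rightarrow> 'u \<Rightarrow> 'u \<Rightarrow>
   ('x \<times> ('i \<Rightarrow> ('h1,'u,'y) hist) \<times> ('i \<Rightarrow> 'u) \<times> ('x \<times> ('i \<Rightarrow> 'y) \<times> ('i \<Rightarrow> real))) set" where
  "Ev i j hi hj ui uj = {(x, h, u, x', y, rw). h i = hi \<and> h j = hj \<and> u i = ui \<and> u j = uj}"

definition Gf where
  "Gf g W f t i j (\<phi> :: _ \<Rightarrow> real) ui uj a = (\<Sum>u\<in>{u. u i = ui \<and> u j = uj}.
     (\<Prod>l\<in>-{i,j}. pmf (g t l (snd a l)) (u l)) *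
     measure_pmf.expectation (W t) (\<lambda>w. \<phi> (fst a, snd a, u, f t (fst a) u w)))"

lemma prod_split2:
  fixes F :: "'i::finite \<Rightarrow> real"
  assumes "i \<noteq> j"
  shows "(\<Prod>l\<in>UNIV. F l) = F i * F j * (\<Prod>l\<in>-{i,j}. F l)"
proof -
  have "(\<Prod>l\<in>UNIV. F l) = F i * (\<Prod>l\<in>UNIV-{i}. F l)" by (rule prod.remove) auto
  also have "(\<Prod>l\<in>UNIV-{i}. F l) = F j * (\<Prod>l\<in>UNIV-{i}-{j}. F l)" using assms by (intro prod.remove) auto
  also have "UNIV - {i} - {j} = -{i,j}" by auto
  finally show ?thesis by simp
qed

lemma sum_if_filter:
  fixes p G :: "'a \<Rightarrow> real"
  assumes "finite A"
  shows "(\<Sum>a\<in>A. p a * (if P a then G a else 0)) = (\<Sum>a\<in>{a\<in>A. P a}. p a * G a)"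
  using assms by (subst sum.inter_filter) (auto intro!: sum.cong)

lemma NUM:
  fixes S :: "('x \<times> ('i::finite \<Rightarrow> ('h1,'u::finite,'y) hist)) pmf"
    and W :: "nat \<Rightarrow> 'w::finite pmf" and \<phi> :: "_ \<Rightarrow> real" and g :: "('i,'h1,'u,'y) profile"
  assumes fin: "finite (set_pmf S)" and ij: "i \<noteq> j"
  shows "measure_pmf.expectation (step_pmf g f W t S) (\<lambda>\<omega>. indicator (Ev i j hi hj ui uj) \<omega> * \<phi> \<omega>) =
    pmf (g t i hi) ui * pmf (g t j hj) uj *
    (\<Sum>a\<in>set_pmf S. pmf S a * (if snd a i = hi \<and> snd a j = hj then Gf g W f t i j \<phi> ui uj a else 0))"
proof -
  have inner: "(\<Sum>u\<in>UNIV. (\<Prod>l\<in>UNIV. pmf (g t l (h l)) (u l)) *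
        measure_pmf.expectation (W t) (\<lambda>w. indicator (Ev i j hi hj ui uj) (x, h, u, f t x u w) * \<phi> (x, h, u, f t x u w)))
     = pmf (g t i hi) ui * pmf (g t j hj) uj * (if h i = hi \<and> h j = hj then Gf g W f t i j \<phi> ui uj (x, h) else 0)" for x h
  proof (cases "h i = hi \<and> h j = hj")
    case True
    have "(\<Sum>u\<in>UNIV. (\<Prod>l\<in>UNIV. pmf (g t l (h l)) (u l)) *
        measure_pmf.expectation (W t) (\<lambda>w. indicator (Ev i j hi hj ui uj) (x, h, u, f t x u w) * \<phi> (x, h, u, f t x u w)))
      = (\<Sum>u\<in>UNIV. (\<Prod>l\<in>UNIV. pmf (g t l (h l)) (u l)) * (if u i = ui \<and> u j = uj then
        measure_pmf.expectation (W t) (\<lambda>w. \<phi> (x, h, u, f t x u w)) else 0))"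
      using True by (intro sum.cong refl) (auto simp: Ev_def)
    also have "\<dots> = (\<Sum>u\<in>{u. u i = ui \<and> u j = uj}. (\<Prod>l\<in>UNIV. pmf (g t l (h l)) (u l)) *
        measure_pmf.expectation (W t) (\<lambda>w. \<phi> (x, h, u, f t x u w)))"
      by (subst sum_if_filter) auto
    also have "\<dots> = (\<Sum>u\<in>{u. u i = ui \<and> u j = uj}. pmf (g t i hi) ui * pmf (g t j hj) uj * ((\<Prod>l\<in>-{i,j}. pmf (g t l (h l)) (u l)) *
        measure_pmf.expectation (W t) (\<lambda>w. \<phi> (x, h, u, f t x u w))))"
      using True by (intro sum.cong refl) (simp add: prod_split2[OF ij])
    also have "\<dots> = pmf (g t i hi) ui * pmf (g t j hj) uj * Gf g W f t i j \<phi> ui uj (x, h)"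
      by (simp add: Gf_def sum_distrib_left)
    finally show ?thesis using True by simp
  next
    case False
    have "(\<Sum>u\<in>UNIV. (\<Prod>l\<in>UNIV. pmf (g t l (h l)) (u l)) *
        measure_pmf.expectation (W t) (\<lambda>w. indicator (Ev i j hi hj ui uj) (x, h, u, f t x u w) * \<phi> (x, h, u, f t x u w)))
      = 0"
      using False by (intro sum.neutral) (auto simp: Ev_def)
    then show ?thesis by (simp add: if_not_P[OF False])
  qed
  have "measure_pmf.expectation (step_pmf g f W t S) (\<lambda>\<omega>. indicator (Ev i j hi hj ui uj) \<omega> * \<phi> \<omega>) =
    (\<Sum>a\<in>set_pmf S. pmf S a * (pmf (g t i hi) ui * pmf (g t j hj) uj *
       (if snd a i = hi \<and> snd a j = hj then Gf g W f t i j \<phi> ui uj a else 0)))"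
    unfolding exp_step[OF fin]
  proof (intro sum.cong refl)
    fix a :: "'x \<times> ('i \<Rightarrow> ('h1,'u,'y) hist)"
    show "pmf S a * (\<Sum>u\<in>UNIV. (\<Prod>l\<in>UNIV. pmf (g t l (snd a l)) (u l)) *
        measure_pmf.expectation (W t) (\<lambda>w. indicator (Ev i j hi hj ui uj) (fst a, snd a, u, f t (fst a) u w) *
           \<phi> (fst a, snd a, u, f t (fst a) u w))) =
      pmf S a * (pmf (g t i hi) ui * pmf (g t j hj) uj *
       (if snd a i = hi \<and> snd a j = hj then Gf g W f t i j \<phi> ui uj a else 0))"
      using inner[where x="fst a" and h="snd a"] by (simp only: prod.collapse)
  qed
  then show ?thesis by (simp only: sum_distrib_left mult.left_commute)
qed

lemma CV:
  fixes S S' :: "('x \<times> ('i \<Rightarrow> 'hh)) pmf" and \<Gamma> \<Gamma>' :: "'x \<times> ('i \<Rightarrow> 'hh) \<Rightarrow> real"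
  assumes fin: "finite (set_pmf S)" "finite (set_pmf S')" and c: "c \<noteq> 0" and ij: "i \<noteq> j"
    and h1: "\<And>x h. h i = hi \<Longrightarrow> h j = hj \<Longrightarrow> pmf S' (x, h(i:=hi')) = c * pmf S (x, h)"
    and h2: "\<And>x h. (x, h) \<in> set_pmf S \<Longrightarrow> h i = hi \<Longrightarrow> h j = hj \<Longrightarrow> \<Gamma>' (x, h(i:=hi')) = \<Gamma> (x, h)"
  shows "(\<Sum>a\<in>set_pmf S'. pmf S' a * (if snd a i = hi' \<and> snd a j = hj then \<Gamma>' a else 0)) =
     c * (\<Sum>a\<in>set_pmf S. pmf S a * (if snd a i = hi \<and> snd a j = hj then \<Gamma> a else 0))"
proof -
  define \<sigma> where "\<sigma> = (\<lambda>(x::'x, h::'i \<Rightarrow> 'hh). (x, h(i:=hi')))"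
  let ?B = "{a\<in>set_pmf S. snd a i = hi \<and> snd a j = hj}"
  have sub1: "(x, h') \<in> \<sigma> ` ?B" if a: "(x, h') \<in> set_pmf S'" "h' i = hi'" "h' j = hj" for x h'
  proof -
    let ?b = "(x, h'(i:=hi))"
    have sb: "\<sigma> ?b = (x, h')" using a by (auto simp: \<sigma>_def)
    have "pmf S' (\<sigma> ?b) = c * pmf S ?b" unfolding \<sigma>_def using h1[of "h'(i:=hi)" x] a ij by simp
    then have "pmf S ?b \<noteq> 0" using a sb by (auto simp: set_pmf_iff)
    then have "?b \<in> ?B" using a ij by (auto simp: set_pmf_iff)
    then show ?thesis using sb by (intro image_eqI[where x="?b" and f=\<sigma>]) auto
  qed
  have sub2: "\<sigma> (x, h) \<in> set_pmf S' \<and> snd (\<sigma> (x, h)) i = hi' \<and> snd (\<sigma> (x, h)) j = hj"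
    if a: "(x, h) \<in> set_pmf S" "h i = hi" "h j = hj" for x h
  proof -
    have "pmf S' (\<sigma> (x, h)) = c * pmf S (x, h)" using h1[of h x] a by (simp add: \<sigma>_def)
    then show ?thesis using a c ij by (auto simp: set_pmf_iff \<sigma>_def)
  qed
  have seteq: "{a\<in>set_pmf S'. snd a i = hi' \<and> snd a j = hj} = \<sigma> ` ?B"
    using sub1 sub2 by fastforce
  have inj: "inj_on \<sigma> {a\<in>set_pmf S. snd a i = hi \<and> snd a j = hj}"
  proof (rule inj_onI)
    fix a b assume ab: "a \<in> ?B" "b \<in> ?B" "\<sigma> a = \<sigma> b"
    obtain x h where a: "a = (x, h)" by (cases a)
    obtain x2 h2 where b: "b = (x2, h2)" by (cases b)
    have "x = x2" "h(i := hi') = h2(i := hi')" "h i = h2 i" using ab a b by (auto simp: \<sigma>_def)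
    then have "x = x2" "h = h2" by (metis fun_upd_triv fun_upd_upd)+
    then show "a = b" using a b by simp
  qed
  have "(\<Sum>a\<in>set_pmf S'. pmf S' a * (if snd a i = hi' \<and> snd a j = hj then \<Gamma>' a else 0))
     = (\<Sum>a\<in>\<sigma> ` {a\<in>set_pmf S. snd a i = hi \<and> snd a j = hj}. pmf S' a * \<Gamma>' a)"
    using fin by (simp add: sum_if_filter seteq)
  also have "\<dots> = (\<Sum>a\<in>{a\<in>set_pmf S. snd a i = hi \<and> snd a j = hj}. pmf S' (\<sigma> a) * \<Gamma>' (\<sigma> a))"
    by (subst sum.reindex[OF inj]) simp
  also have "\<dots> = (\<Sum>a\<in>{a\<in>set_pmf S. snd a i = hi \<and> snd a j = hj}. c * (pmf S a * \<Gamma> a))"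
    by (intro sum.cong refl) (auto simp: \<sigma>_def h1 h2)
  also have "\<dots> = c * (\<Sum>a\<in>set_pmf S. pmf S a * (if snd a i = hi \<and> snd a j = hj then \<Gamma> a else 0))"
    using fin by (simp add: sum_if_filter sum_distrib_left)
  finally show ?thesis .
qed



lemma Gf_shift:
  fixes \<psi> :: "_ \<Rightarrow> real"
  assumes hg: "\<And>l. l \<noteq> i \<Longrightarrow> l \<noteq> j \<Longrightarrow> g' t l (h l) = g t l (h l)"
    and h\<psi>: "\<And>x h v r. \<psi> (x, h(i:=v), r) = \<psi> (x, h, r)"
  shows "Gf g' W f t i j \<psi> ui uj (x, h(i:=v)) = Gf g W f t i j \<psi> ui uj (x, h)"
  unfolding Gf_def using hg h\<psi> by (intro sum.cong refl arg_cong2[where f="(*)"] prod.cong) auto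

lemma GR:
  fixes S S' :: "('x \<times> ('i::finite \<Rightarrow> ('h1,'u::finite,'y) hist)) pmf" and W :: "nat \<Rightarrow> 'w::finite pmf"
    and \<phi> :: "_ \<Rightarrow> real" and g g' :: "('i,'h1,'u,'y) profile"
  assumes fin: "finite (set_pmf S)" "finite (set_pmf S')" and ij: "i \<noteq> j" and c: "c \<noteq> 0"
    and h1: "\<And>x h. h i = hi \<Longrightarrow> h j = hj \<Longrightarrow> pmf S' (x, h(i:=hi')) = c * pmf S (x, h)"
    and hg: "\<And>x h l. (x,h) \<in> set_pmf S \<Longrightarrow> h i = hi \<Longrightarrow> h j = hj \<Longrightarrow> l \<noteq> i \<Longrightarrow> l \<noteq> j \<Longrightarrow> g' t l (h l) = g t l (h l)"
    and h\<phi>: "\<And>x h v r. \<phi> (x, h(i:=v), r) = \<phi> (x, h, r)"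
    and a': "pmf (g' t i hi') ui * pmf (g' t j hj) uj \<noteq> 0"
    and pos: "measure_pmf.prob (step_pmf g f W t S) (Ev i j hi hj ui uj) > 0"
  shows "measure_pmf.prob (step_pmf g' f W t S') (Ev i j hi' hj ui uj) > 0 \<and>
         cexp (step_pmf g f W t S) \<phi> (Ev i j hi hj ui uj) = cexp (step_pmf g' f W t S') \<phi> (Ev i j hi' hj ui uj)"
proof -
  have pe: "measure_pmf.prob p E = measure_pmf.expectation p (\<lambda>\<omega>. indicator E \<omega> * (\<lambda>_. 1::real) \<omega>)" for p :: "'z pmf" and E
    by simp
  define a where "a = pmf (g t i hi) ui * pmf (g t j hj) uj"
  define a2 where "a2 = pmf (g' t i hi') ui * pmf (g' t j hj) uj"
  define N where "N = (\<Sum>a\<in>set_pmf S. pmf S a * (if snd a i = hi \<and> snd a j = hj then Gf g W f t i j \<phi> ui uj a else 0))"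
  define D where "D = (\<Sum>a\<in>set_pmf S. pmf S a * (if snd a i = hi \<and> snd a j = hj then Gf g W f t i j (\<lambda>_. 1) ui uj a else 0))"
  define N' where "N' = (\<Sum>a\<in>set_pmf S'. pmf S' a * (if snd a i = hi' \<and> snd a j = hj then Gf g' W f t i j \<phi> ui uj a else 0))"
  define D' where "D' = (\<Sum>a\<in>set_pmf S'. pmf S' a * (if snd a i = hi' \<and> snd a j = hj then Gf g' W f t i j (\<lambda>_. 1) ui uj a else 0))"
  have e1: "measure_pmf.expectation (step_pmf g f W t S) (\<lambda>\<omega>. indicator (Ev i j hi hj ui uj) \<omega> * \<phi> \<omega>) = a * N"
    unfolding a_def N_def by (rule NUM[OF fin(1) ij])
  have e2: "measure_pmf.prob (step_pmf g f W t S) (Ev i j hi hj ui uj) = a * D"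
    unfolding a_def D_def pe by (rule NUM[OF fin(1) ij])
  have e3: "measure_pmf.expectation (step_pmf g' f W t S') (\<lambda>\<omega>. indicator (Ev i j hi' hj ui uj) \<omega> * \<phi> \<omega>) = a2 * N'"
    unfolding a2_def N'_def by (rule NUM[OF fin(2) ij])
  have e4: "measure_pmf.prob (step_pmf g' f W t S') (Ev i j hi' hj ui uj) = a2 * D'"
    unfolding a2_def D'_def pe by (rule NUM[OF fin(2) ij])
  have NN: "N' = c * N" unfolding N_def N'_def
    by (rule CV[OF fin c ij h1]) (auto intro!: Gf_shift hg h\<phi>)
  have DD: "D' = c * D" unfolding D_def D'_def
    by (rule CV[OF fin c ij h1]) (auto intro!: Gf_shift hg)
  have "a \<noteq> 0" "D \<noteq> 0" using pos e2 by auto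
  moreover have "a2 \<noteq> 0" using a' by (simp add: a2_def)
  ultimately have "measure_pmf.prob (step_pmf g' f W t S') (Ev i j hi' hj ui uj) \<noteq> 0"
    using e4 DD c by simp
  then have p2: "measure_pmf.prob (step_pmf g' f W t S') (Ev i j hi' hj ui uj) > 0"
    using measure_nonneg[of "measure_pmf (step_pmf g' f W t S')" "Ev i j hi' hj ui uj"] by linarith
  have "cexp (step_pmf g f W t S) \<phi> (Ev i j hi hj ui uj) = (a * N) / (a * D)"
    unfolding cexp_def e1 e2 ..
  also have "\<dots> = (a2 * (c * N)) / (a2 * (c * D))"
    using \<open>a \<noteq> 0\<close> \<open>a2 \<noteq> 0\<close> c by simp
  also have "\<dots> = cexp (step_pmf g' f W t S') \<phi> (Ev i j hi' hj ui uj)"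
    unfolding cexp_def e3 e4 NN DD ..
  finally show ?thesis using p2 by simp
qed



definition canon :: "(nat \<Rightarrow> 'i \<Rightarrow> 'u set) \<Rightarrow> nat \<Rightarrow> 'i \<Rightarrow> 'i \<Rightarrow> ('i,'h1,'u,'y) profile \<Rightarrow> ('i,'h1,'u,'y) profile" where
  "canon U T i j g = (\<lambda>t l h. if t \<in> {1..T} \<and> length (snd h) = t - 1 then
      (if l = i \<or> l = j then pmf_of_set (U t l) else g t l h) else return_pmf undefined)"

lemma beh_U: "behavioral T U g \<Longrightarrow> t \<in> {1..T} \<Longrightarrow> length (snd h) = t - 1 \<Longrightarrow> u \<in> set_pmf (g t l h) \<Longrightarrow> u \<in> U t l"
  unfolding behavioral_def by blast

lemma beh_U_ne: "behavioral T U g \<Longrightarrow> t \<in> {1..T} \<Longrightarrow> U t l \<noteq> {}"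
  for g :: "('i,'h1,'u,'y) profile"
proof -
  assume b: "behavioral T U g" and t: "t \<in> {1..T}"
  let ?h = "(undefined, replicate (t - 1) undefined) :: ('h1,'u,'y) hist"
  obtain u where "u \<in> set_pmf (g t l ?h)" using set_pmf_not_empty by fast
  moreover have "length (snd ?h) = t - 1" by simp
  ultimately have "u \<in> U t l" using beh_U[OF b t] by blast
  then show ?thesis by auto
qed

lemma canon_beh:
  fixes U :: "nat \<Rightarrow> 'i \<Rightarrow> 'u::finite set" and g :: "('i,'h1,'u,'y) profile"
  assumes "behavioral T U g"
  shows "behavioral T U (canon U T i j g)"
  unfolding behavioral_def
proof (intro ballI allI impI)
  fix t l and h :: "('h1,'u,'y) hist" assume t: "t \<in> {1..T}" and len: "length (snd h) = t - 1"
  show "set_pmf (canon U T i j g t l h) \<subseteq> U t l"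
  proof (cases "l = i \<or> l = j")
    case True
    then show ?thesis using t len beh_U_ne[OF assms t] by (simp add: canon_def)
  next
    case False
    have "set_pmf (g t l h) \<subseteq> U t l" using beh_U[OF assms t len] by blast
    then show ?thesis using t len False by (simp add: canon_def)
  qed
qed

lemma canon_agree: "agree_on T (-{i,j}) g g' \<Longrightarrow> canon U T i j g = canon U T i j g'"
proof (intro ext)
  assume a: "agree_on T (-{i,j}) g g'"
  fix t l h
  show "canon U T i j g t l h = canon U T i j g' t l h"
  proof (cases "t \<in> {1..T} \<and> length (snd h) = t - 1 \<and> l \<notin> {i,j}")
    case True
    then have "g t l h = g' t l h" using a unfolding agree_on_def by blast
    then show ?thesis by (simp add: canon_def)
  next
    case False
    then show ?thesis by (auto simp: canon_def)
  qed
qed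

lemma SUPP:
  assumes "measure_pmf.prob (step_pmf g f W t S) (Ev i j hi hj ui uj) > 0"
  shows "\<exists>x h. (x, h) \<in> set_pmf S \<and> h i = hi \<and> h j = hj \<and> ui \<in> set_pmf (g t i hi) \<and> uj \<in> set_pmf (g t j hj)"
proof -
  have "set_pmf (step_pmf g f W t S) \<inter> Ev i j hi hj ui uj \<noteq> {}"
  proof -
    have "measure_pmf.prob (step_pmf g f W t S) (Ev i j hi hj ui uj) \<noteq> 0" using assms by simp
    then show ?thesis by (simp add: measure_pmf_zero_iff)
  qed
  then obtain \<omega> where w: "\<omega> \<in> set_pmf (step_pmf g f W t S)" "\<omega> \<in> Ev i j hi hj ui uj" by blast
  from set_step_iff[OF w(1)] obtain x h u w' where "\<omega> = (x, h, u, f t x u w')" "(x, h) \<in> set_pmf S"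
    "\<forall>l. u l \<in> set_pmf (g t l (h l))" by blast
  with w(2) show ?thesis by (auto simp: Ev_def)
qed

lemma wl_canon_eq:
  assumes "l \<noteq> i" "l \<noteq> j" "n < T"
  shows "wl (canon U T i j g) l n hl = wl g l n hl"
  unfolding wl_def using assms by (intro if_cong refl prod.cong) (auto simp: canon_def)

lemma wl_canon_nz:
  fixes U :: "nat \<Rightarrow> 'i \<Rightarrow> 'u::finite set"
  assumes b: "behavioral T U g" and n: "n < T" and nz: "wl g l n hl \<noteq> 0"
  shows "wl (canon U T i j g) l n hl \<noteq> 0"
proof -
  have len: "length (snd hl) = n" using nz by (simp add: wl_def split: if_splits)
  have fac: "pmf (g (Suc s) l (fst hl, take s (snd hl))) (fst (snd hl ! s)) \<noteq> 0" if "s < n" for s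
    using nz len that by (simp add: wl_def)
  have "pmf (canon U T i j g (Suc s) l (fst hl, take s (snd hl))) (fst (snd hl ! s)) \<noteq> 0" if s: "s < n" for s
  proof -
    have t: "Suc s \<in> {1..T}" using s n by auto
    have ls: "length (snd (fst hl, take s (snd hl))) = Suc s - 1" using s len by simp
    have inU: "fst (snd hl ! s) \<in> U (Suc s) l"
      using beh_U[OF b t ls] fac[OF s] by (simp add: set_pmf_iff)
    show ?thesis
    proof (cases "l = i \<or> l = j")
      case True
      have "finite (U (Suc s) l)" by simp
      then have "card (U (Suc s) l) > 0" using inU by (auto simp: card_gt_0_iff)
      moreover have "pmf (pmf_of_set (U (Suc s) l)) (fst (snd hl ! s)) = indicator (U (Suc s) l) (fst (snd hl ! s)) / card (U (Suc s) l)"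
        using inU by (intro pmf_of_set) auto
      ultimately show ?thesis using True t ls inU by (auto simp: canon_def)
    next
      case False
      then show ?thesis using t ls fac[OF s] by (auto simp: canon_def)
    qed
  qed
  then show ?thesis using len by (simp add: wl_def)
qed

lemma measure_cond:
  assumes "set_pmf p \<inter> E \<noteq> {}"
  shows "measure_pmf.prob (cond_pmf p E) B = measure_pmf.prob p (E \<inter> B) / measure_pmf.prob p E"
proof -
  have "measure_pmf (cond_pmf p E) = uniform_measure (measure_pmf p) E"
    using assms by (rule cond_pmf.rep_eq)
  moreover have "emeasure (measure_pmf p) E \<noteq> 0" using assms by (rule emeasure_measure_pmf_not_zero)
  ultimately show ?thesis by (simp add: measure_pmf.emeasure_eq_measure)
qed

lemma cprob_cexp: "cprob p A B = cexp p (indicator A) B"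
proof -
  have "(\<lambda>\<omega>. indicator B \<omega> * indicator A \<omega> :: real) = indicator (A \<inter> B)"
    by (auto simp: indicator_def fun_eq_iff)
  then show ?thesis unfolding cprob_def cexp_def by simp
qed



lemma cexp_bound:
  fixes init :: "('x::finite \<times> ('i::finite \<Rightarrow> 'h1::finite)) pmf"
    and W :: "nat \<Rightarrow> 'w::finite pmf"
    and f :: "('x,'i,'u::finite,'w,'y::finite) dyn"
    and g :: "('i,'h1,'u,'y) profile"
  assumes rew: "\<forall>t\<in>{1..T}. \<forall>x u w l. (\<forall>m. u m \<in> U t m) \<longrightarrow> \<bar>snd (snd (f t x u w)) l\<bar> \<le> 1"
    and b: "behavioral T U g" and t: "t \<in> {1..T}"
  shows "\<bar>cexp (trans_at init W f g t) (\<lambda>(x, h, u, x', y, rw). rw j) E\<bar> \<le> 1"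
proof -
  let ?p = "trans_at init W f g t"
  let ?X = "(\<lambda>(x, h, u, x', y, rw). rw j) :: _ \<Rightarrow> real"
  have fin: "finite (set_pmf ?p)" unfolding trans_at_def state_at_def by (intro fin_step fin_state)
  have bnd: "\<bar>?X \<omega>\<bar> \<le> 1" if "\<omega> \<in> set_pmf ?p" for \<omega>
  proof -
    from set_step_iff[OF that[unfolded trans_at_def]] obtain x h u w where
      o: "\<omega> = (x, h, u, f t x u w)" "(x, h) \<in> set_pmf (state_at init W f g t)" "\<forall>l. u l \<in> set_pmf (g t l (h l))"
      by blast
    have "u m \<in> U t m" for m
      using beh_U[OF b t len_state[OF o(2)[unfolded state_at_def]] ] o(3) by blast
    then have "\<bar>snd (snd (f t x u w)) j\<bar> \<le> 1" using rew t by blast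
    then show ?thesis using o(1) by (cases "f t x u w") simp
  qed
  have i1: "measure_pmf.expectation ?p (\<lambda>\<omega>. indicator E \<omega> * ?X \<omega>) \<le> measure_pmf.expectation ?p (indicator E)"
    using fin bnd
    by (intro integral_mono_AE integrable_measure_pmf_finite)
       (auto simp: AE_measure_pmf_iff indicator_def abs_le_iff)
  have i2: "- measure_pmf.expectation ?p (indicator E) \<le> measure_pmf.expectation ?p (\<lambda>\<omega>. indicator E \<omega> * ?X \<omega>)"
  proof -
    have "measure_pmf.expectation ?p (\<lambda>\<omega>. - indicator E \<omega>) \<le> measure_pmf.expectation ?p (\<lambda>\<omega>. indicator E \<omega> * ?X \<omega>)"
      using fin bnd
      by (intro integral_mono_AE integrable_measure_pmf_finite)
         (auto simp: AE_measure_pmf_iff indicator_def abs_le_iff)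
    then show ?thesis by simp
  qed
  have pe: "measure_pmf.expectation ?p (indicator E) = measure_pmf.prob ?p E" by simp
  show ?thesis
  proof (cases "measure_pmf.prob ?p E = 0")
    case True
    then show ?thesis by (simp add: cexp_def)
  next
    case False
    then have "measure_pmf.prob ?p E > 0" using measure_nonneg[of "measure_pmf ?p" E] by linarith
    then show ?thesis using i1 i2 unfolding cexp_def pe
      by (simp add: abs_le_iff divide_le_eq_1 le_divide_eq)
  qed
qed



lemma pmf_nz_split:
  fixes init :: "('x::finite \<times> ('i::finite \<Rightarrow> 'h1::finite)) pmf"
    and W :: "nat \<Rightarrow> 'w::finite pmf"
    and f :: "('x,'i,'u::finite,'w,'y::finite) dyn"
    and g :: "('i,'h1,'u,'y) profile"
  assumes "(x, h) \<in> set_pmf (state_pmf init W f g n)" "i \<noteq> j"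
  shows "wl g i n (h i) \<noteq> 0 \<and> wl g j n (h j) \<noteq> 0"
proof -
  have "pmf (state_pmf init W f g n) (x, h) \<noteq> 0" using assms by (simp add: set_pmf_iff)
  then show ?thesis by (simp add: prod_formula prod_split2[OF assms(2)])
qed

lemma KEY_A:
  fixes init :: "('x::finite \<times> ('i::finite \<Rightarrow> 'h1::finite)) pmf"
    and W :: "nat \<Rightarrow> 'w::finite pmf"
    and f :: "('x,'i,'u::finite,'w,'y::finite) dyn"
    and U :: "nat \<Rightarrow> 'i \<Rightarrow> 'u set"
    and g :: "('i,'h1,'u,'y) profile"
    and \<phi> :: "_ \<Rightarrow> real"
  assumes ij: "i \<noteq> j" and b: "behavioral T U g" and t: "t \<in> {1..T}"
    and h\<phi>: "\<And>x h v r. \<phi> (x, h(i:=v), r) = \<phi> (x, h, r)"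
    and pos: "measure_pmf.prob (trans_at init W f g t) (Ev i j hi hj ui uj) > 0"
  shows "measure_pmf.prob (trans_at init W f (canon U T i j g) t) (Ev i j hi hj ui uj) > 0 \<and>
    cexp (trans_at init W f g t) \<phi> (Ev i j hi hj ui uj) = cexp (trans_at init W f (canon U T i j g) t) \<phi> (Ev i j hi hj ui uj)"
proof -
  define n where "n = t - 1"
  define cg where "cg = canon U T i j g"
  let ?S = "state_pmf init W f g n" and ?S1 = "state_pmf init W f cg n"
  have tr: "trans_at init W f g t = step_pmf g f W t ?S" "trans_at init W f cg t = step_pmf cg f W t ?S1"
    by (simp_all add: trans_at_def state_at_def n_def)
  have nT: "n < T" using t by (auto simp: n_def)
  obtain x0 h0 where s0: "(x0, h0) \<in> set_pmf ?S" "h0 i = hi" "h0 j = hj" "ui \<in> set_pmf (g t i hi)" "uj \<in> set_pmf (g t j hj)"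
    using SUPP[OF pos[unfolded tr]] by blast
  have wg: "wl g i n hi \<noteq> 0" "wl g j n hj \<noteq> 0" using pmf_nz_split[OF s0(1) ij] s0 by auto
  have wc: "wl cg i n hi \<noteq> 0" "wl cg j n hj \<noteq> 0"
    unfolding cg_def using wl_canon_nz[OF b nT wg(1)] wl_canon_nz[OF b nT wg(2)] by auto
  define c where "c = (wl cg i n hi * wl cg j n hj) / (wl g i n hi * wl g j n hj)"
  have c: "c \<noteq> 0" using wg wc by (simp add: c_def)
  have h1: "pmf ?S1 (x, h(i:=hi)) = c * pmf ?S (x, h)" if "h i = hi" "h j = hj" for x h
  proof -
    have hh: "h(i:=hi) = h" using that by auto
    have R: "(\<Prod>l\<in>-{i,j}. wl cg l n (h l)) = (\<Prod>l\<in>-{i,j}. wl g l n (h l))"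
      unfolding cg_def using nT by (intro prod.cong refl wl_canon_eq) auto
    show ?thesis unfolding hh prod_formula prod_split2[OF ij, of "\<lambda>l. wl _ l n (h l)"] R
      using that wg by (simp add: c_def field_simps)
  qed
  have hg: "cg t l (h l) = g t l (h l)" if "(x, h) \<in> set_pmf ?S" "h i = hi" "h j = hj" "l \<noteq> i" "l \<noteq> j" for x h l
    using len_state[OF that(1), of l] that t by (simp add: cg_def canon_def n_def)
  have lhi: "length (snd hi) = t - 1" "length (snd hj) = t - 1"
    using len_state[OF s0(1), of i] len_state[OF s0(1), of j] s0 by (auto simp: n_def)
  have pu: "pmf (cg t l hl) u \<noteq> 0" if "l = i \<or> l = j" "length (snd hl) = t - 1" "u \<in> set_pmf (g t l hl)" for l hl u
  proof -
    have inU: "u \<in> U t l" using beh_U[OF b t that(2,3)] .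
    have "finite (U t l)" by simp
    then have "card (U t l) > 0" using inU by (auto simp: card_gt_0_iff)
    moreover have "pmf (pmf_of_set (U t l)) u = indicator (U t l) u / card (U t l)"
      using inU by (intro pmf_of_set) auto
    ultimately show ?thesis using that t inU by (auto simp: cg_def canon_def)
  qed
  have a': "pmf (cg t i hi) ui * pmf (cg t j hj) uj \<noteq> 0"
    using pu[of i hi ui] pu[of j hj uj] lhi s0 by auto
  have fin: "finite (set_pmf ?S)" "finite (set_pmf ?S1)" by (rule fin_state)+
  have main: "measure_pmf.prob (step_pmf cg f W t ?S1) (Ev i j hi hj ui uj) > 0 \<and>
    cexp (step_pmf g f W t ?S) \<phi> (Ev i j hi hj ui uj) = cexp (step_pmf cg f W t ?S1) \<phi> (Ev i j hi hj ui uj)"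
    apply (rule GR[where S="?S" and S'="?S1" and g=g and g'=cg and t=t and hi=hi and hi'=hi and hj=hj
        and ui=ui and uj=uj and c=c and \<phi>=\<phi> and f=f and W=W and i=i and j=j,
        OF fin ij c])
    apply (rule h1; assumption)
    apply (rule hg; assumption)
    apply (rule h\<phi>)
    apply (rule a')
    apply (rule pos[unfolded tr])
    done
  then show ?thesis unfolding cg_def[symmetric] tr by simp
qed



lemma KEY_B:
  fixes init :: "('x::finite \<times> ('i::finite \<Rightarrow> 'h1::finite)) pmf"
    and W :: "nat \<Rightarrow> 'w::finite pmf"
    and f :: "('x,'i,'u::finite,'w,'y::finite) dyn"
    and U :: "nat \<Rightarrow> 'i \<Rightarrow> 'u set"
    and g :: "('i,'h1,'u,'y) profile"
    and \<iota>1 :: "'i \<Rightarrow> 'h1 \<Rightarrow> 'k"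
    and \<iota> :: "nat \<Rightarrow> 'i \<Rightarrow> 'k \<Rightarrow> 'u \<times> 'y \<Rightarrow> 'k"
    and \<phi> :: "_ \<Rightarrow> real"
  assumes usi: "USI init W f U T \<iota>1 \<iota> i" and ij: "i \<noteq> j" and b: "behavioral T U g" and t: "t \<in> {1..T}"
    and h\<phi>: "\<And>x h v r. \<phi> (x, h(i:=v), r) = \<phi> (x, h, r)"
    and pos: "measure_pmf.prob (trans_at init W f g t) (Ev i j hi hj ui uj) > 0"
    and pos2: "measure_pmf.prob (trans_at init W f g t) (Ev i j hi2 hj ui uj) > 0"
    and kk: "compress \<iota>1 \<iota> i hi2 = compress \<iota>1 \<iota> i hi"
  shows "cexp (trans_at init W f g t) \<phi> (Ev i j hi hj ui uj) = cexp (trans_at init W f g t) \<phi> (Ev i j hi2 hj ui uj)"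
proof -
  obtain F :: "('i,'h1,'u,'y) profile \<Rightarrow> nat \<Rightarrow> 'k \<Rightarrow> ('h1,'u,'y) hist pmf"
    and \<Phi> :: "('i,'h1,'u,'y) profile \<Rightarrow> nat \<Rightarrow> 'k \<Rightarrow> ('x \<times> ('i \<Rightarrow> ('h1,'u,'y) hist)) pmf"
    where all: "(\<forall>g g'. behavioral T U g \<and> behavioral T U g' \<and> agree_on T {i} g g' \<longrightarrow> F g = F g') \<and>
      (\<forall>g g'. behavioral T U g \<and> behavioral T U g' \<and> agree_on T (- {i}) g g' \<longrightarrow> \<Phi> g = \<Phi> g') \<and>
      (\<forall>g. behavioral T U g \<longrightarrow>
        (\<forall>t\<in>{1..T}. \<forall>k.
          measure_pmf.prob (state_at init W f g t) {(x, h). compress \<iota>1 \<iota> i (h i) = k} > 0 \<longrightarrow>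
          (\<forall>x h. cprob (state_at init W f g t) {(x, h)} {(x', h'). compress \<iota>1 \<iota> i (h' i) = k}
                 = pmf (F g t k) (h i) * pmf (\<Phi> g t k) (x, h(i := undefined)))))"
    using usi[unfolded USI_def] by (elim exE) (rule that)
  note F\<Phi> = conjunct2[OF conjunct2[OF all]]
  define k where "k = compress \<iota>1 \<iota> i hi"
  define S where "S = state_at init W f g t"
  define K where "K = {(x::'x, h::'i \<Rightarrow> ('h1,'u,'y) hist). compress \<iota>1 \<iota> i (h i) = k}"
  have tr: "trans_at init W f g t = step_pmf g f W t S" by (simp add: trans_at_def S_def)
  obtain x1 h1 where s1: "(x1, h1) \<in> set_pmf S" "h1 i = hi" "h1 j = hj"
    using SUPP[OF pos[unfolded tr]] by blast
  obtain x2 h2 where s2: "(x2, h2) \<in> set_pmf S" "h2 i = hi2" "h2 j = hj" "ui \<in> set_pmf (g t i hi2)" "uj \<in> set_pmf (g t j hj)"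
    using SUPP[OF pos2[unfolded tr]] by blast
  have PK: "measure_pmf.prob S K > 0"
    using s1 by (intro measure_pmf_posI[of "(x1, h1)"]) (auto simp: K_def k_def)
  have cp: "\<forall>x h. cprob S {(x, h)} K = pmf (F g t k) (h i) * pmf (\<Phi> g t k) (x, h(i := undefined))"
    using F\<Phi>[rule_format, OF b t PK[unfolded S_def K_def]] unfolding S_def K_def by blast
  have eq: "pmf S (x, h) = measure_pmf.prob S K * (pmf (F g t k) (h i) * pmf (\<Phi> g t k) (x, h(i := undefined)))"
    if "compress \<iota>1 \<iota> i (h i) = k" for x h
  proof -
    have "{(x, h)} \<inter> K = {(x, h)}" using that by (auto simp: K_def)
    then have "cprob S {(x, h)} K = pmf S (x, h) / measure_pmf.prob S K"
      by (simp add: cprob_def measure_pmf_single)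
    then show ?thesis using cp PK by (simp add: field_simps)
  qed
  have Fh: "pmf (F g t k) hi \<noteq> 0"
  proof -
    have "pmf S (x1, h1) \<noteq> 0" using s1 by (simp add: set_pmf_iff)
    then show ?thesis using eq[of h1 x1] s1 by (auto simp: k_def)
  qed
  have Fs: "pmf (F g t k) hi2 \<noteq> 0"
  proof -
    have "pmf S (x2, h2) \<noteq> 0" using s2 by (simp add: set_pmf_iff)
    then show ?thesis using eq[of h2 x2] s2 kk by (auto simp: k_def)
  qed
  define c where "c = pmf (F g t k) hi2 / pmf (F g t k) hi"
  have c: "c \<noteq> 0" using Fh Fs by (simp add: c_def)
  have h1: "pmf S (x, h(i:=hi2)) = c * pmf S (x, h)" if "h i = hi" "h j = hj" for x h
  proof -
    have e1: "pmf S (x, h(i:=hi2)) = measure_pmf.prob S K * (pmf (F g t k) hi2 * pmf (\<Phi> g t k) (x, h(i := undefined)))"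
      using eq[of "h(i:=hi2)" x] kk by (simp add: k_def)
    have e2: "pmf S (x, h) = measure_pmf.prob S K * (pmf (F g t k) hi * pmf (\<Phi> g t k) (x, h(i := undefined)))"
      using eq[of h x] that by (simp add: k_def)
    show ?thesis unfolding e1 e2 c_def using Fh by (simp add: field_simps)
  qed
  have hg: "g t l (h l) = g t l (h l)" if "(x, h) \<in> set_pmf S" "h i = hi" "h j = hj" "l \<noteq> i" "l \<noteq> j" for x h l
    by (rule refl)
  have a': "pmf (g t i hi2) ui * pmf (g t j hj) uj \<noteq> 0" using s2 by (simp add: set_pmf_iff)
  have fin: "finite (set_pmf S)" unfolding S_def state_at_def by (rule fin_state)
  have main: "measure_pmf.prob (step_pmf g f W t S) (Ev i j hi2 hj ui uj) > 0 \<and>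
    cexp (step_pmf g f W t S) \<phi> (Ev i j hi hj ui uj) = cexp (step_pmf g f W t S) \<phi> (Ev i j hi2 hj ui uj)"
    apply (rule GR[where S="S" and S'="S" and g=g and g'=g and t=t and hi=hi and hi'=hi2 and hj=hj
        and ui=ui and uj=uj and c=c and \<phi>=\<phi> and f=f and W=W and i=i and j=j,
        OF fin fin ij c])
    apply (rule h1; assumption)
    apply (rule hg; assumption)
    apply (rule h\<phi>)
    apply (rule a')
    apply (rule pos[unfolded tr])
    done
  then show ?thesis unfolding tr by simp
qed



theorem lemma8:
  fixes init :: "('x::finite \<times> ('i::finite \<Rightarrow> 'h1::finite)) pmf"
    and W :: "nat \<Rightarrow> 'w::finite pmf"
    and f :: "('x,'i,'u::finite,'w,'y::finite) dyn"
    and U :: "nat \<Rightarrow> 'i \<Rightarrow> 'u set"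
    and T :: nat
    and \<iota>1 :: "'i \<Rightarrow> 'h1 \<Rightarrow> 'k"
    and \<iota> :: "nat \<Rightarrow> 'i \<Rightarrow> 'k \<Rightarrow> 'u \<times> 'y \<Rightarrow> 'k"
    and i j :: 'i
  assumes rew: "\<forall>t\<in>{1..T}. \<forall>x u w l. (\<forall>m. u m \<in> U t m) \<longrightarrow> \<bar>snd (snd (f t x u w)) l\<bar> \<le> 1"
    and usi: "USI init W f U T \<iota>1 \<iota> i"
    and ji: "j \<noteq> i"
  shows "\<exists>(Pi_j :: ('i,'h1,'u,'y) profile \<Rightarrow> nat \<Rightarrow> 'k \<Rightarrow> ('h1,'u,'y) hist \<Rightarrow> 'u \<Rightarrow> 'u \<Rightarrow> ('h1,'u,'y) hist pmf)
           (r :: ('i,'h1,'u,'y) profile \<Rightarrow> nat \<Rightarrow> 'k \<Rightarrow> ('h1,'u,'y) hist \<Rightarrow> 'u \<Rightarrow> 'u \<Rightarrow> real).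
     (\<forall>g g'. behavioral T U g \<and> behavioral T U g' \<and> agree_on T (- {i, j}) g g'
        \<longrightarrow> Pi_j g = Pi_j g' \<and> r g = r g') \<and>
     (\<forall>g t k hj ui uj. r g t k hj ui uj \<in> {-1..1}) \<and>
     (\<forall>g. behavioral T U g \<longrightarrow>
       (\<forall>t\<in>{1..T}. \<forall>hi hj ui uj.
         measure_pmf.prob (trans_at init W f g t)
            {(x, h, u, x', y, rw). h i = hi \<and> h j = hj \<and> u i = ui \<and> u j = uj} > 0 \<longrightarrow>
         ((t < T \<longrightarrow>
            (\<forall>hn. cprob (trans_at init W f g t)
                     {(x, h, u, x', y, rw). next_hist (h j) (u j) (y j) = hn}
                     {(x, h, u, x', y, rw). h i = hi \<and> h j = hj \<and> u i = ui \<and> u j = uj}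
                   = pmf (Pi_j g t (compress \<iota>1 \<iota> i hi) hj ui uj) hn)) \<and>
          cexp (trans_at init W f g t) (\<lambda>(x, h, u, x', y, rw). rw j)
              {(x, h, u, x', y, rw). h i = hi \<and> h j = hj \<and> u i = ui \<and> u j = uj}
            = r g t (compress \<iota>1 \<iota> i hi) hj ui uj)))"
proof -
  have ij: "i \<noteq> j" using ji by auto
  define cg where "cg g = canon U T i j g" for g :: "('i,'h1,'u,'y) profile"
  define good where "good g t k hj ui uj hi \<longleftrightarrow> compress \<iota>1 \<iota> i hi = k \<and>
     measure_pmf.prob (trans_at init W f (cg g) t) (Ev i j hi hj ui uj) > 0"
    for g t k hj ui uj and hi :: "('h1,'u,'y) hist"
  define Pi_j where "Pi_j g t k hj ui uj = (if \<exists>hi. good g t k hj ui uj hi then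
     map_pmf (\<lambda>(x::'x, h::'i \<Rightarrow> ('h1,'u,'y) hist, u::'i \<Rightarrow> 'u, x'::'x, y::'i \<Rightarrow> 'y, rw::'i \<Rightarrow> real). next_hist (h j) (u j) (y j))
       (cond_pmf (trans_at init W f (cg g) t) (Ev i j (SOME hi. good g t k hj ui uj hi) hj ui uj))
     else return_pmf undefined)" for g t k hj ui uj
  define r where "r g t k hj ui uj = (if \<exists>hi. good g t k hj ui uj hi then
     max (-1) (min 1 (cexp (trans_at init W f (cg g) t) (\<lambda>(x::'x, h::'i \<Rightarrow> ('h1,'u,'y) hist, u::'i \<Rightarrow> 'u, x'::'x, y::'i \<Rightarrow> 'y, rw::'i \<Rightarrow> real). rw j)
       (Ev i j (SOME hi. good g t k hj ui uj hi) hj ui uj)))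
     else 0)" for g t k hj ui uj
  show ?thesis
  proof (intro exI[of _ Pi_j] exI[of _ r] conjI)
    show "\<forall>g g'. behavioral T U g \<and> behavioral T U g' \<and> agree_on T (- {i, j}) g g'
        \<longrightarrow> Pi_j g = Pi_j g' \<and> r g = r g'"
    proof (intro allI impI)
      fix g g' :: "('i,'h1,'u,'y) profile"
      assume a: "behavioral T U g \<and> behavioral T U g' \<and> agree_on T (- {i, j}) g g'"
      then have eq: "cg g = cg g'" unfolding cg_def by (intro canon_agree) simp
      have geq: "good g = good g'" by (intro ext) (simp add: good_def eq)
      show "Pi_j g = Pi_j g' \<and> r g = r g'" by (intro conjI ext) (simp_all only: Pi_j_def r_def geq eq)
    qed
    show "\<forall>g t k hj ui uj. r g t k hj ui uj \<in> {-1..1}" by (simp add: r_def)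
    show "\<forall>g. behavioral T U g \<longrightarrow>
       (\<forall>t\<in>{1..T}. \<forall>hi hj ui uj.
         measure_pmf.prob (trans_at init W f g t)
            {(x, h, u, x', y, rw). h i = hi \<and> h j = hj \<and> u i = ui \<and> u j = uj} > 0 \<longrightarrow>
         ((t < T \<longrightarrow>
            (\<forall>hn. cprob (trans_at init W f g t)
                     {(x, h, u, x', y, rw). next_hist (h j) (u j) (y j) = hn}
                     {(x, h, u, x', y, rw). h i = hi \<and> h j = hj \<and> u i = ui \<and> u j = uj}
                   = pmf (Pi_j g t (compress \<iota>1 \<iota> i hi) hj ui uj) hn)) \<and>
          cexp (trans_at init W f g t) (\<lambda>(x, h, u, x', y, rw). rw j)
              {(x, h, u, x', y, rw). h i = hi \<and> h j = hj \<and> u i = ui \<and> u j = uj}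
            = r g t (compress \<iota>1 \<iota> i hi) hj ui uj))"
    proof (intro allI impI ballI)
      fix g :: "('i,'h1,'u,'y) profile" and t hi hj ui uj
      assume b: "behavioral T U g" and t: "t \<in> {1..T}"
        and pos0: "measure_pmf.prob (trans_at init W f g t)
            {(x, h, u, x', y, rw). h i = hi \<and> h j = hj \<and> u i = ui \<and> u j = uj} > 0"
      have Ev_eq: "{(x, h, u, x', y, rw). h i = hi \<and> h j = hj \<and> u i = ui \<and> u j = uj} = Ev i j hi hj ui uj"
        for hi :: "('h1,'u,'y) hist" by (simp add: Ev_def)
      have pos: "measure_pmf.prob (trans_at init W f g t) (Ev i j hi hj ui uj) > 0"
        using pos0 unfolding Ev_eq .
      define k where "k = compress \<iota>1 \<iota> i hi"
      have bc: "behavioral T U (cg g)" unfolding cg_def by (rule canon_beh[OF b])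
      have gen: "cexp (trans_at init W f g t) \<phi> (Ev i j hi hj ui uj) =
          cexp (trans_at init W f (cg g) t) \<phi> (Ev i j (SOME hi. good g t k hj ui uj hi) hj ui uj)
        \<and> (\<exists>hi. good g t k hj ui uj hi) \<and> good g t k hj ui uj (SOME hi. good g t k hj ui uj hi)"
        if h\<phi>: "\<And>x h v r. \<phi> (x, h(i:=v), r) = \<phi> (x, h, r)" for \<phi> :: "_ \<Rightarrow> real"
      proof -
        have KA: "measure_pmf.prob (trans_at init W f (cg g) t) (Ev i j hi hj ui uj) > 0 \<and>
          cexp (trans_at init W f g t) \<phi> (Ev i j hi hj ui uj) = cexp (trans_at init W f (cg g) t) \<phi> (Ev i j hi hj ui uj)"
          unfolding cg_def by (rule KEY_A[OF ij b t h\<phi> pos])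
        have gh: "good g t k hj ui uj hi" using KA by (simp add: good_def k_def)
        then have ex: "\<exists>hi. good g t k hj ui uj hi" by blast
        define hs where "hs = (SOME hi. good g t k hj ui uj hi)"
        have gs: "good g t k hj ui uj hs" unfolding hs_def using ex by (rule someI_ex)
        have KB: "cexp (trans_at init W f (cg g) t) \<phi> (Ev i j hi hj ui uj) = cexp (trans_at init W f (cg g) t) \<phi> (Ev i j hs hj ui uj)"
          using gs gh KA by (intro KEY_B[OF usi ij bc t h\<phi>]) (auto simp: good_def k_def)
        show ?thesis using KA KB ex gs by (simp add: hs_def)
      qed
      let ?hs = "SOME hi. good g t k hj ui uj hi"
      let ?p = "trans_at init W f (cg g) t"
      show "(t < T \<longrightarrow>
            (\<forall>hn. cprob (trans_at init W f g t)
                     {(x, h, u, x', y, rw). next_hist (h j) (u j) (y j) = hn}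
                     {(x, h, u, x', y, rw). h i = hi \<and> h j = hj \<and> u i = ui \<and> u j = uj}
                   = pmf (Pi_j g t (compress \<iota>1 \<iota> i hi) hj ui uj) hn)) \<and>
          cexp (trans_at init W f g t) (\<lambda>(x, h, u, x', y, rw). rw j)
              {(x, h, u, x', y, rw). h i = hi \<and> h j = hj \<and> u i = ui \<and> u j = uj}
            = r g t (compress \<iota>1 \<iota> i hi) hj ui uj"
      proof (intro conjI impI allI)
        fix hn
        let ?A = "{(x, h, u, x', y, rw). next_hist (h j) (u j) (y j) = hn} :: ('x \<times> ('i \<Rightarrow> ('h1,'u,'y) hist) \<times> ('i \<Rightarrow> 'u) \<times> 'x \<times> ('i \<Rightarrow> 'y) \<times> ('i \<Rightarrow> real)) set"
        have hA: "indicator ?A (x, h(i:=v), rr) = (indicator ?A (x, h, rr) :: real)" for x h v rr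
          using ji by (cases rr) (simp add: indicator_def)
        note G = gen[OF hA]
        have gs: "good g t k hj ui uj ?hs" using G by blast
        then have ps: "measure_pmf.prob ?p (Ev i j ?hs hj ui uj) > 0" by (simp add: good_def)
        then have ne: "set_pmf ?p \<inter> Ev i j ?hs hj ui uj \<noteq> {}"
          by (simp add: measure_pmf_zero_iff[symmetric])
        have pre: "(\<lambda>(x::'x, h::'i \<Rightarrow> ('h1,'u,'y) hist, u::'i \<Rightarrow> 'u, x'::'x, y::'i \<Rightarrow> 'y, rw::'i \<Rightarrow> real). next_hist (h j) (u j) (y j)) -` {hn} = ?A"
          by auto
        have "pmf (Pi_j g t (compress \<iota>1 \<iota> i hi) hj ui uj) hn =
           measure_pmf.prob (cond_pmf ?p (Ev i j ?hs hj ui uj)) ?A"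
          using G by (simp add: Pi_j_def k_def[symmetric] pmf_map pre)
        also have "\<dots> = cprob ?p ?A (Ev i j ?hs hj ui uj)"
          by (simp add: measure_cond[OF ne] cprob_def Int_commute)
        also have "\<dots> = cprob (trans_at init W f g t) ?A (Ev i j hi hj ui uj)"
          using G by (simp add: cprob_cexp)
        finally show "cprob (trans_at init W f g t) ?A
                     {(x, h, u, x', y, rw). h i = hi \<and> h j = hj \<and> u i = ui \<and> u j = uj}
                   = pmf (Pi_j g t (compress \<iota>1 \<iota> i hi) hj ui uj) hn"
          unfolding Ev_eq by simp
      next
        let ?R = "(\<lambda>(x, h, u, x', y, rw). rw j) :: ('x \<times> ('i \<Rightarrow> ('h1,'u,'y) hist) \<times> ('i \<Rightarrow> 'u) \<times> 'x \<times> ('i \<Rightarrow> 'y) \<times> ('i \<Rightarrow> real)) \<Rightarrow> real"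
        have hR: "?R (x, h(i:=v), rr) = ?R (x, h, rr)" for x h v rr
          by (cases rr) simp
        note G = gen[OF hR]
        have bd: "\<bar>cexp ?p ?R (Ev i j ?hs hj ui uj)\<bar> \<le> 1"
          by (rule cexp_bound[OF rew bc t])
        have "r g t (compress \<iota>1 \<iota> i hi) hj ui uj = cexp ?p ?R (Ev i j ?hs hj ui uj)"
          using G bd by (simp add: r_def k_def[symmetric] abs_le_iff)
        also have "\<dots> = cexp (trans_at init W f g t) ?R (Ev i j hi hj ui uj)"
          using G by simp
        finally show "cexp (trans_at init W f g t) ?R
              {(x, h, u, x', y, rw). h i = hi \<and> h j = hj \<and> u i = ui \<and> u j = uj}
            = r g t (compress \<iota>1 \<iota> i hi) hj ui uj"
          unfolding Ev_eq by simp
      qed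
    qed
  qed
qed

end
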